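(* Let $n\in\mathbb{N}$ and let $v(z)=\big(\log\frac{e}{1-|z|}\big)^{-n}$ for $z\in\mathbb{D}$. Then $\sup_{t\in[0,1)}\|C_t\|_{H^\infty_v\to H^\infty_v}=\infty$.
   Context: $\mathbb{D}=\{z\in\mathbb{C}:|z|<1\}$ and $H(\mathbb{D})$ is the space of holomorphic functions on $\mathbb{D}$. For a weight $v$ (continuous non-increasing $v\colon[0,1)\to(0,\infty)$, with $v(z):=v(|z|)$), $H^\infty_v=\{f\in H(\mathbb{D}):\|f\|_{\infty,v}:=\sup_{z\in\mathbb{D}}|f(z)|v(z)<\infty\}$ with norm $\|\cdot\|_{\infty,v}$. For $t\in[0,1)$ the generalized Cesàro operator $C_t$ is defined on $f\in H(\mathbb{D})$ by $C_tf(0)=f(0)$ and $C_tf(z)=\frac{1}{z}\int_0^z\frac{f(\xi)}{1-t\xi}\,d\xi$ for $z\neq0$; it is a bounded operator on $H^\infty_v$. *)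

theory Defs
  imports "HOL-Complex_Analysis.Complex_Analysis" "HOL-Library.Extended_Real"
begin

text \<open>Weight v : [0,1) -> (0,oo), extended radially to the disc by v(z) = v(|z|).\<close>

definition log_weight :: "nat \<Rightarrow> real \<Rightarrow> real" where
  "log_weight n r = inverse ((ln (exp 1 / (1 - r))) ^ n)"

definition wnorm :: "(real \<Rightarrow> real) \<Rightarrow> (complex \<Rightarrow> complex) \<Rightarrow> ereal" where
  "wnorm v f = (SUP z\<in>ball 0 1. ereal (norm (f z) * v (norm z)))"

definition Hinf_v :: "(real \<Rightarrow> real) \<Rightarrow> (complex \<Rightarrow> complex) set" where
  "Hinf_v v = {f. f holomorphic_on ball 0 1 \<and> wnorm v f < \<infinity>}"

definition cesaro :: "real \<Rightarrow> (complex \<Rightarrow> complex) \<Rightarrow> complex \<Rightarrow> complex" where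
  "cesaro t f z = (if z = 0 then f 0
     else (1 / z) * contour_integral (linepath 0 z) (\<lambda>\<xi>. f \<xi> / (1 - complex_of_real t * \<xi>)))"

definition cesaro_opnorm :: "(real \<Rightarrow> real) \<Rightarrow> real \<Rightarrow> ereal" where
  "cesaro_opnorm v t = (SUP f\<in>{f\<in>Hinf_v v. wnorm v f \<le> 1}. wnorm v (cesaro t f))"

end

theory Submission
  imports Defs
begin

definition testf :: "nat \<Rightarrow> complex \<Rightarrow> complex" where
  "testf n z = ((1 - Ln (1 - z)) / 5) ^ n"

lemma lw_eq: "r < 1 \<Longrightarrow> log_weight n r = inverse ((1 - ln (1 - r)) ^ n)"
  unfolding log_weight_def by (simp add: ln_div)

lemma testf_holo: "testf n holomorphic_on ball 0 1"
proof -
  have "(\<lambda>z. ((1 - Ln (1 - z)) / 5) ^ n) holomorphic_on ball 0 1"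
  proof (intro holomorphic_intros)
    fix z :: complex assume "z \<in> ball 0 1"
    then have "norm z < 1" by simp
    then have "Re z < 1" using complex_Re_le_cmod[of z] by linarith
    then have "Re (1 - z) > 0" by simp
    then show "1 - z \<notin> \<real>\<^sub>\<le>\<^sub>0" by (auto simp: complex_nonpos_Reals_iff)
  qed simp
  then show ?thesis unfolding testf_def[abs_def] .
qed

lemma testf_bound:
  assumes "(z::complex) \<in> ball 0 1"
  shows "norm (testf n z) * log_weight n (norm z) \<le> 1"
proof -
  define r where "r = norm z"
  have r1: "r < 1" "0 \<le> r" using assms by (auto simp: r_def)
  define L where "L = 1 - ln (1 - r)"
  have lnr: "ln (1 - r) \<le> 0" using r1 by simp
  have L1: "L \<ge> 1" using lnr by (simp add: L_def)
  define w where "w = 1 - z"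
  have Rew: "Re w > 0" using complex_Re_le_cmod[of z] r1 by (simp add: w_def r_def)
  then have w0: "w \<noteq> 0" by auto
  have Im: "\<bar>Im (Ln w)\<bar> \<le> pi/2" using Re_Ln_pos_lt_imp[OF Rew] by simp
  have wle: "norm w \<le> 2" using r1 norm_triangle_ineq4[of 1 z] by (simp add: w_def r_def)
  have wge: "norm w \<ge> 1 - r" using norm_triangle_ineq2[of 1 z] by (simp add: w_def r_def)
  have "\<bar>ln (norm w)\<bar> \<le> L"
  proof (cases "norm w \<ge> 1")
    case True
    have "ln (norm w) \<le> ln 2" using wle True by (subst ln_le_cancel_iff) auto
    also have "\<dots> \<le> 1" using ln_2_less_1 by simp
    finally show ?thesis using True L1 by simp
  next
    case False
    have "ln (1 - r) \<le> ln (norm w)" using wge r1 by (subst ln_le_cancel_iff) auto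
    then show ?thesis using False w0 L_def by simp
  qed
  then have "norm (Ln w) \<le> L + pi/2" using cmod_le[of "Ln w"] Im w0 by simp
  then have "norm (1 - Ln w) \<le> 1 + L + pi/2" using norm_triangle_ineq4[of 1 "Ln w"] by simp
  also have "\<dots> \<le> 5 * L" using L1 pi_less_4 by simp
  finally have b: "norm ((1 - Ln w) / 5) \<le> L" by simp
  have "norm (testf n z) = norm ((1 - Ln w) / 5) ^ n" by (simp add: testf_def w_def norm_power)
  also have "\<dots> \<le> L ^ n" by (rule power_mono[OF b]) simp
  finally have "norm (testf n z) \<le> L ^ n" .
  moreover have "log_weight n (norm z) = inverse (L ^ n)" using lw_eq r1 by (simp add: L_def r_def)
  moreover have "L ^ n > 0" using L1 by simp
  ultimately show ?thesis by (simp add: field_simps)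
qed

lemma aux: "(m::real) \<noteq> 0 \<Longrightarrow> m * a * (x / q) / (m * 2 * p) = a * x / (q * 2 * p)"
  by (cases "q = 0"; cases "p = 0") (auto simp: field_simps)

lemma cesaro_lower:
  assumes x0: "0 < x" and x1: "x < (1::real)"
  shows "norm (cesaro x (testf n) (of_real x)) \<ge>
           ((1 - ln (1 - x)) ^ Suc n - 1) / (real (Suc n) * 2 * 5 ^ n)"
proof -
  define A where "A s = 1 - ln (1 - s * x)" for s
  define h where "h s = (A s / 5) ^ n / (1 - x * (s * x)) * x" for s
  define c where "c = real (Suc n) * 2 * 5 ^ n"
  have c0: "c > 0" by (simp add: c_def)
  define H where "H s = A s ^ Suc n / c" for s
  define H' where "H' s = A s ^ n * x / ((1 - s * x) * 2 * 5 ^ n)" for s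
  have sx: "s * x < 1" "0 \<le> s * x" if "s \<in> {0..1}" for s
  proof -
    have "s * x \<le> 1 * x" using that x0 by (intro mult_right_mono) auto
    then show "s * x < 1" using x1 by simp
    show "0 \<le> s * x" using that x0 by simp
  qed
  have sxx: "x * (s * x) \<le> s * x" if "s \<in> {0..1}" for s
    using sx[OF that] x1 x0 by (simp add: mult_left_le_one_le)
  have A1: "A s \<ge> 1" if "s \<in> {0..1}" for s
    using sx[OF that] by (simp add: A_def)
  have eq: "testf n (linepath 0 (of_real x) s) / (1 - of_real x * linepath 0 (of_real x) s)
          * (of_real x - 0) = of_real (h s)" if "s \<in> {0..1}" for s
  proof -
    have lp: "linepath 0 (complex_of_real x) s = of_real (s * x)"
      by (simp add: linepath_def scaleR_conv_of_real)
    have e1: "1 - complex_of_real (s * x) = of_real (1 - s * x)" by simp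
    have "Ln (1 - complex_of_real (s * x)) = of_real (ln (1 - s * x))"
      unfolding e1 using sx[OF that] by (intro Ln_of_real) simp
    then have "testf n (of_real (s * x)) = of_real ((A s / 5) ^ n)"
      by (simp add: testf_def A_def)
    then show ?thesis unfolding lp by (simp add: h_def)
  qed
  have pos: "1 - s * x > 0 \<and> 1 - x * (s * x) > 0" if "s \<in> {0..1}" for s
    using sx[OF that] sxx[OF that] by linarith
  have hcont: "continuous_on {0..1} h"
    unfolding h_def A_def
    using pos by (intro continuous_intros) (auto dest: pos)
  then obtain J where J: "(h has_integral J) {0..1}"
    using integrable_continuous_interval by blast
  have "((\<lambda>s. of_real (h s) :: complex) has_integral of_real J) {0..1}"
    using has_integral_of_real[OF J] .
  then have "((\<lambda>s. testf n (linepath 0 (of_real x) s) / (1 - of_real x * linepath 0 (of_real x) s)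
          * (of_real x - 0)) has_integral of_real J) {0..1}"
    by (rule has_integral_eq[rotated]) (rule sym, erule eq)
  then have "((\<lambda>\<xi>. testf n \<xi> / (1 - of_real x * \<xi>)) has_contour_integral of_real J) (linepath 0 (of_real x))"
    by (simp add: has_contour_integral_linepath)
  then have ci: "contour_integral (linepath 0 (of_real x)) (\<lambda>\<xi>. testf n \<xi> / (1 - of_real x * \<xi>)) = of_real J"
    by (rule contour_integral_unique)
  have ces: "cesaro x (testf n) (of_real x) = of_real (J / x)"
    using x0 by (simp add: cesaro_def ci)
  have der: "(H has_vector_derivative H' s) (at s within {0..1})" if "s \<in> {0..1}" for s
  proof -
    have q: "1 - s * x > 0" using sx[OF that] by simp
    have dA: "(A has_real_derivative x / (1 - s * x)) (at s within {0..1})"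
      unfolding A_def
      by (rule derivative_eq_intros refl | use q in simp)+
    have d: "(H has_real_derivative (real (Suc n) * A s ^ n * (x / (1 - s * x)) / c)) (at s within {0..1})"
      unfolding H_def
      apply (rule DERIV_cong[OF DERIV_divide[OF DERIV_power[OF dA, of "Suc n"] DERIV_const[of c]]])
      using c0 q by (auto simp: power2_eq_square field_simps)
    have "real (Suc n) * A s ^ n * (x / (1 - s * x)) / c = H' s"
      unfolding c_def H'_def by (rule aux) simp
    with d have "(H has_real_derivative H' s) (at s within {0..1})" by simp
    then show ?thesis by (simp add: has_real_derivative_iff_has_vector_derivative)
  qed
  have ftc: "(H' has_integral (H 1 - H 0)) {0..1}"
    by (rule fundamental_theorem_of_calculus) (use der in auto)
  have le: "H' s \<le> h s" if "s \<in> {0..1}" for s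
  proof -
    have p1: "0 < 1 - x * (s * x)" using sx[OF that] sxx[OF that] by simp
    have p2: "1 - x * (s * x) \<le> (1 - s * x) * 2"
    proof -
      have a: "s * x \<le> x" using that x0 by (simp add: mult_left_le_one_le)
      have b: "s * x * (s * x) \<le> x * (s * x)" using a sx[OF that] by (intro mult_right_mono) auto
      have c: "(1 - s * x) * (1 + s * x) \<le> (1 - s * x) * 2" using sx[OF that] by (intro mult_left_mono) auto
      have "1 - x * (s * x) \<le> (1 - s * x) * (1 + s * x)" using b by (simp add: algebra_simps)
      then show ?thesis using c by linarith
    qed
    have "1 / ((1 - s * x) * 2) \<le> 1 / (1 - x * (s * x))"
      using p1 p2 by (intro divide_left_mono) auto
    then have "A s ^ n * x / 5 ^ n * (1 / ((1 - s * x) * 2)) \<le> A s ^ n * x / 5 ^ n * (1 / (1 - x * (s * x)))"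
      using A1[OF that] x0 by (intro mult_left_mono) auto
    then show ?thesis by (simp add: H'_def h_def power_divide field_simps)
  qed
  have "H 1 - H 0 \<le> J" using has_integral_le[OF ftc J le] by simp
  moreover have "H 1 - H 0 = ((1 - ln (1 - x)) ^ Suc n - 1) / c"
    by (simp add: H_def A_def diff_divide_distrib)
  moreover have "J / x \<ge> J" if "J \<ge> 0"
    using that x0 x1 by (simp add: le_divide_eq mult_right_le_one_le)
  moreover have "(1 - ln (1 - x)) ^ Suc n \<ge> 1"
  proof -
    have "1 - ln (1 - x) \<ge> 1" using x0 x1 by simp
    then show ?thesis by (rule one_le_power)
  qed
  ultimately show ?thesis using ces c0 unfolding c_def[symmetric]
    by (smt (verit) divide_nonneg_pos norm_of_real)
qed

theorem proposition2p12:
  fixes n :: nat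
  assumes "n \<ge> 1"
  shows "(SUP t\<in>{0..<1::real}. cesaro_opnorm (log_weight n) t) = \<infinity>"
proof -
  have fn: "wnorm (log_weight n) (testf n) \<le> 1"
    unfolding wnorm_def by (rule SUP_least) (use testf_bound in simp)
  then have fH: "testf n \<in> Hinf_v (log_weight n)"
    unfolding Hinf_v_def using testf_holo by (auto simp: order_le_less_trans)
  show ?thesis
  proof (rule SUP_PInfty)
    fix N :: nat
    define c where "c = real (Suc n) * 2 * 5 ^ n"
    have c0: "c > 0" by (simp add: c_def)
    define K where "K = real N * c + 1"
    have K0: "K > 0" using c0 by (simp add: K_def add_nonneg_pos)
    define x where "x = 1 - exp (-K)"
    have x0: "0 < x" and x1: "x < 1" using K0 by (auto simp: x_def)
    have lnx: "ln (1 - x) = -K" by (simp add: x_def)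
    have low: "norm (cesaro x (testf n) (of_real x)) \<ge> ((1 + K) ^ Suc n - 1) / c"
      using cesaro_lower[OF x0 x1, of n] lnx by (simp add: c_def)
    have w: "log_weight n (norm (complex_of_real x)) = inverse ((1 + K) ^ n)"
      using lw_eq[OF x1, of n] lnx x0 by simp
    have P: "(1 + K) ^ n \<ge> 1" using K0 by (intro one_le_power) simp
    have "(1 + K) ^ Suc n - 1 \<ge> K * (1 + K) ^ n"
      using P by (simp add: algebra_simps)
    then have "((1 + K) ^ Suc n - 1) / c * inverse ((1 + K) ^ n) \<ge> K / c"
      using P c0 by (simp add: field_simps)
    moreover have "K / c \<ge> real N" using c0 by (simp add: K_def field_simps)
    moreover have "norm (cesaro x (testf n) (of_real x)) * inverse ((1 + K) ^ n)
        \<ge> ((1 + K) ^ Suc n - 1) / c * inverse ((1 + K) ^ n)"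
      using low P by (intro mult_right_mono) auto
    ultimately have "real N \<le> norm (cesaro x (testf n) (of_real x)) * log_weight n (norm (complex_of_real x))"
      unfolding w by linarith
    then have "ereal (real N) \<le> wnorm (log_weight n) (cesaro x (testf n))"
      unfolding wnorm_def using x0 x1
      by (intro SUP_upper2[of "complex_of_real x"]) auto
    also have "\<dots> \<le> cesaro_opnorm (log_weight n) x"
      unfolding cesaro_opnorm_def using fH fn by (intro SUP_upper) auto
    finally show "\<exists>t\<in>{0..<1::real}. ereal (real N) \<le> cesaro_opnorm (log_weight n) t"
      using x0 x1 by auto
  qed
qed

end
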